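(* Let $r\ge1$ and $n\in\mathbb{Z}_{>0}$. Every $\omega\in\Omega^r_n$ satisfies $|\xi|\le|\omega|\le|\xi|\,|\pi|^{-n}$.
   Context: Let $F$ be a global function field, $\infty$ a place of $F$, $\pi$ a uniformizer at $\infty$, $F_\infty$ the completion at $\infty$, $\mathbb{C}_\infty$ the completion of an algebraic closure of $F_\infty$ with absolute value $|\cdot|$. Fix $\xi\in\mathbb{C}_\infty^\times$. $\Omega^r$ is the set of column vectors $\omega=(\omega_1,\dots,\omega_r)^T\in\mathbb{C}_\infty^r$ with $F_\infty$-linearly independent entries and $\omega_r=\xi$. A linear form $F_\infty^r\to F_\infty$ is unimodular if its largest coefficient has absolute value $1$. Put $|\omega|:=\max_i|\omega_i|$, $h(\omega):=|\omega|^{-1}\inf\{|\ell(\omega)|:\ell$ a unimodular $F_\infty$-linear form$\}$, and $\Omega^r_n:=\{\omega\in\Omega^r:h(\omega)\ge|\pi|^n\}$. *)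

theory Defs
  imports "HOL-Computational_Algebra.Polynomial"
begin

text \<open>Abstract setting: the ambient field 'a plays the role of C_infinity, with a
 (multiplicative, non-archimedean, non-trivial) absolute value av; the set K plays the
 role of the subfield F_infinity.\<close>

definition nonarch_abs_value :: "('a::field \<Rightarrow> real) \<Rightarrow> bool" where
  "nonarch_abs_value av \<longleftrightarrow>
     (\<forall>x. av x \<ge> 0) \<and> (\<forall>x. av x = 0 \<longleftrightarrow> x = 0) \<and>
     (\<forall>x y. av (x * y) = av x * av y) \<and>
     (\<forall>x y. av (x + y) \<le> max (av x) (av y)) \<and>
     (\<exists>x. av x \<noteq> 0 \<and> av x \<noteq> 1)"

definition subfield_of :: "'a::field set \<Rightarrow> bool" where
  "subfield_of K \<longleftrightarrow> 0 \<in> K \<and> 1 \<in> K \<and>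
     (\<forall>x\<in>K. \<forall>y\<in>K. x + y \<in> K \<and> x * y \<in> K) \<and>
     (\<forall>x\<in>K. - x \<in> K \<and> inverse x \<in> K)"

definition av_complete :: "('a::field \<Rightarrow> real) \<Rightarrow> 'a set \<Rightarrow> bool" where
  "av_complete av S \<longleftrightarrow>
     (\<forall>x::nat \<Rightarrow> 'a. (\<forall>m. x m \<in> S) \<and>
        (\<forall>e>0. \<exists>N. \<forall>m\<ge>N. \<forall>k\<ge>N. av (x m - x k) < e) \<longrightarrow>
        (\<exists>L\<in>S. \<forall>e>0. \<exists>N. \<forall>m\<ge>N. av (x m - L) < e))"

definition alg_closed_field :: "'a::field itself \<Rightarrow> bool" where
  "alg_closed_field _ \<longleftrightarrow> (\<forall>p::'a poly. degree p > 0 \<longrightarrow> (\<exists>z. poly p z = 0))"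

definition uniformizer :: "('a::field \<Rightarrow> real) \<Rightarrow> 'a set \<Rightarrow> 'a \<Rightarrow> bool" where
  "uniformizer av K \<pi> \<longleftrightarrow> \<pi> \<in> K \<and> 0 < av \<pi> \<and> av \<pi> < 1 \<and>
     (\<forall>x\<in>K. x \<noteq> 0 \<longrightarrow> (\<exists>k::int. av x = av \<pi> powi k))"

definition finite_residue_field :: "('a::field \<Rightarrow> real) \<Rightarrow> 'a set \<Rightarrow> bool" where
  "finite_residue_field av K \<longleftrightarrow>
     finite ((\<lambda>x. {y\<in>K. av y \<le> 1 \<and> av (x - y) < 1}) ` {x\<in>K. av x \<le> 1})"

text \<open>Vectors omega = (omega_1,...,omega_r) are functions nat => 'a on indices 1..r.\<close>
definition vnorm :: "('a \<Rightarrow> real) \<Rightarrow> nat \<Rightarrow> (nat \<Rightarrow> 'a) \<Rightarrow> real" where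
  "vnorm av r \<omega> = Max ((\<lambda>i. av (\<omega> i)) ` {1..r})"

definition unimodular :: "('a \<Rightarrow> real) \<Rightarrow> 'a set \<Rightarrow> nat \<Rightarrow> (nat \<Rightarrow> 'a) \<Rightarrow> bool" where
  "unimodular av K r c \<longleftrightarrow> (\<forall>i\<in>{1..r}. c i \<in> K) \<and> Max ((\<lambda>i. av (c i)) ` {1..r}) = 1"

definition hgt :: "('a::field \<Rightarrow> real) \<Rightarrow> 'a set \<Rightarrow> nat \<Rightarrow> (nat \<Rightarrow> 'a) \<Rightarrow> real" where
  "hgt av K r \<omega> = inverse (vnorm av r \<omega>) *
      Inf {av (\<Sum>i=1..r. c i * \<omega> i) | c. unimodular av K r c}"

definition Omega :: "('a::field \<Rightarrow> real) \<Rightarrow> 'a set \<Rightarrow> nat \<Rightarrow> 'a \<Rightarrow> (nat \<Rightarrow> 'a) set" where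
  "Omega av K r \<xi> = {\<omega>. \<omega> r = \<xi> \<and>
      (\<forall>c. (\<forall>i\<in>{1..r}. c i \<in> K) \<and> (\<Sum>i=1..r. c i * \<omega> i) = 0 \<longrightarrow> (\<forall>i\<in>{1..r}. c i = 0))}"

definition Omega_n :: "('a::field \<Rightarrow> real) \<Rightarrow> 'a set \<Rightarrow> nat \<Rightarrow> 'a \<Rightarrow> 'a \<Rightarrow> nat \<Rightarrow> (nat \<Rightarrow> 'a) set" where
  "Omega_n av K r \<xi> \<pi> n = {\<omega> \<in> Omega av K r \<xi>. hgt av K r \<omega> \<ge> av \<pi> ^ n}"

end

theory Submission
  imports Defs
begin

theorem lemma3p3:
  fixes av :: "'a::field \<Rightarrow> real" and K :: "'a set" and \<pi> \<xi> :: 'a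
    and r n :: nat and \<omega> :: "nat \<Rightarrow> 'a"
  assumes "nonarch_abs_value av"
    and "alg_closed_field TYPE('a)"
    and "av_complete av UNIV"
    and "subfield_of K"
    and "av_complete av K"
    and "finite_residue_field av K"
    and "uniformizer av K \<pi>"
    and "\<xi> \<noteq> 0"
    and "r \<ge> 1" and "n > 0"
    and "\<omega> \<in> Omega_n av K r \<xi> \<pi> n"
  shows "av \<xi> \<le> vnorm av r \<omega> \<and> vnorm av r \<omega> \<le> av \<xi> * av \<pi> powi (- int n)"
proof -
  have nn: "\<And>x. av x \<ge> 0" and z: "\<And>x. av x = 0 \<longleftrightarrow> x = 0"
    and mul: "\<And>x y. av (x * y) = av x * av y"
    using assms(1) unfolding nonarch_abs_value_def by auto
  have av1: "av 1 = 1"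
  proof -
    have "av 1 = av 1 * av 1" using mul[of 1 1] by simp
    moreover have "av 1 \<noteq> 0" using z by simp
    ultimately show ?thesis by simp
  qed
  have av0: "av 0 = 0" using z by simp
  have wr: "\<omega> r = \<xi>" and hg: "hgt av K r \<omega> \<ge> av \<pi> ^ n"
    using assms(11) unfolding Omega_n_def Omega_def by auto
  have rin: "r \<in> {1..r}" using assms(9) by simp
  have fin: "finite ((\<lambda>i. av (\<omega> i)) ` {1..r})" by simp
  have V1: "av \<xi> \<le> vnorm av r \<omega>"
    unfolding vnorm_def using Max_ge[OF fin, of "av (\<omega> r)"] rin wr by auto
  have xpos: "av \<xi> > 0" using nn[of \<xi>] z[of \<xi>] assms(8) by linarith
  have Vpos: "vnorm av r \<omega> > 0" using V1 xpos by linarith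
  define c :: "nat \<Rightarrow> 'a" where "c = (\<lambda>i. if i = r then 1 else 0)"
  have K01: "0 \<in> K" "1 \<in> K" using assms(4) unfolding subfield_of_def by auto
  have "(\<lambda>i. av (c i)) ` {1..r} = (if r = 1 then {1} else {0, 1})"
  proof (cases "r = 1")
    case True then show ?thesis using av1 by (auto simp: c_def)
  next
    case False
    have "(\<lambda>i. av (c i)) ` {1..r} = {0,1}"
    proof
      show "(\<lambda>i. av (c i)) ` {1..r} \<subseteq> {0, 1}" using av1 av0 by (auto simp: c_def split: if_splits)
      have "av (c r) = 1" "av (c 1) = 0" using av1 av0 False by (auto simp: c_def)
      then show "{0, 1} \<subseteq> (\<lambda>i. av (c i)) ` {1..r}" using rin assms(9)
        by (metis atLeastAtMost_iff empty_subsetI image_eqI insert_subset le_refl)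
    qed
    then show ?thesis using False by simp
  qed
  then have um: "unimodular av K r c"
    unfolding unimodular_def using K01 by (auto simp: c_def)
  have sm: "(\<Sum>i=1..r. c i * \<omega> i) = \<xi>"
  proof -
    have "(\<Sum>i=1..r. c i * \<omega> i) = (\<Sum>i\<in>{1..r}. if i = r then \<omega> i else 0)"
      by (rule sum.cong) (auto simp: c_def)
    also have "\<dots> = \<omega> r" using rin by (simp add: sum.delta')
    finally show ?thesis using wr by simp
  qed
  let ?S = "{av (\<Sum>i=1..r. c i * \<omega> i) | c. unimodular av K r c}"
  have "av \<xi> \<in> ?S" using um sm by force
  moreover have "bdd_below ?S" using nn by (auto intro: bdd_belowI[of _ 0])
  ultimately have I: "Inf ?S \<le> av \<xi>" by (rule cInf_lower)
  have "av \<pi> ^ n \<le> inverse (vnorm av r \<omega>) * av \<xi>"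
    using hg I Vpos unfolding hgt_def
    by (smt (verit) inverse_nonnegative_iff_nonnegative mult_left_mono)
  then have "av \<pi> ^ n * vnorm av r \<omega> \<le> av \<xi>" using Vpos
    by (simp add: field_simps)
  moreover have pp: "av \<pi> > 0" using assms(7) unfolding uniformizer_def by auto
  ultimately have "vnorm av r \<omega> \<le> av \<xi> / av \<pi> ^ n"
    by (simp add: field_simps)
  moreover have "av \<pi> powi (- int n) = inverse (av \<pi> ^ n)"
    by (simp add: power_int_minus)
  ultimately show ?thesis using V1 by (simp add: divide_inverse)
qed

end
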